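(* Let $k$ be as in the context. For every $\rho\in(0,\log\sqrt3)$ there exist $\lambda_\rho^+>0$, $\lambda_\rho^-<0$ and $u_\rho^+,u_\rho^-\in C[0,1]$ with $\|u_\rho^\pm\|_\infty=\rho$ such that $(\lambda,u)=(\lambda_\rho^\pm,u_\rho^\pm)$ solves \[ u(t)=\lambda\int_0^1k(t,s)\,\frac{\sin(\tfrac32\pi s)e^{u(s)}}{\int_0^1e^{u(x)}\,dx}\,ds,\qquad t\in[0,1], \] equivalently the Neumann problem $u''(t)+\frac{\pi^2}{4}u(t)=\lambda\,\sin(\tfrac32\pi t)e^{u(t)}/\int_0^1e^{u(x)}dx$ on $(0,1)$, $u'(0)=u'(1)=0$. Moreover every pair $(\lambda,u)\in\mathbb{R}\times C[0,1]$ with $\|u\|_\infty=\rho$ solving this integral equation satisfies \[ |\lambda|\le\frac{4\pi^2\rho}{9e^{-2\rho}-e^{2\rho}}. \]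
   Context: $k(t,s)=\frac2\pi\cos(\frac\pi2(1-s))\cos(\frac\pi2 t)$ for $0\le t\le s\le 1$ and $k(t,s)=\frac2\pi\cos(\frac\pi2(1-t))\cos(\frac\pi2 s)$ for $0\le s\le t\le 1$. *)

theory Defs
  imports "HOL-Analysis.Analysis"
begin

definition kern :: "real \<Rightarrow> real \<Rightarrow> real" where
  "kern t s = (if t \<le> s
     then 2 / pi * cos (pi / 2 * (1 - s)) * cos (pi / 2 * t)
     else 2 / pi * cos (pi / 2 * (1 - t)) * cos (pi / 2 * s))"

definition supnorm01 :: "(real \<Rightarrow> real) \<Rightarrow> real" where
  "supnorm01 u = (SUP t\<in>{0..1}. \<bar>u t\<bar>)"

definition solves :: "real \<Rightarrow> (real \<Rightarrow> real) \<Rightarrow> bool" where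
  "solves lam u \<longleftrightarrow> continuous_on {0..1} u \<and>
     (\<forall>t\<in>{0..1}. u t = lam * integral {0..1}
        (\<lambda>s. kern t s * (sin (3 / 2 * pi * s) * exp (u s) / integral {0..1} (\<lambda>x. exp (u x)))))"

end

theory Submission
  imports Defs "HOL-Homology.Homology" "HOL-Complex_Analysis.Great_Picard"
begin

lemma homotopic_canonI:
  fixes h :: "real \<times> 'a::topological_space \<Rightarrow> 'b::topological_space"
  assumes "continuous_on ({0..1}\<times>S) h" "h \<in> ({0..1}\<times>S) \<rightarrow> T"
    "\<And>x. x\<in>S \<Longrightarrow> h(0,x) = f x" "\<And>x. x\<in>S \<Longrightarrow> h(1,x) = g x"
  shows "homotopic_with_canon (\<lambda>h. True) S T f g"
proof -
  have "({0..1} \<times> UNIV) \<inter> ({0..1} \<times> S) = {0..1::real} \<times> S" by auto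
  then show ?thesis
  using assms
  by (auto simp add: homotopic_with continuous_map_subtopology_eu prod_topology_subtopology subtopology_subtopology intro!: exI[of _ h])
qed

definition Dn :: "nat \<Rightarrow> (nat \<Rightarrow> real) set" where
  "Dn n = {x. (\<forall>i>n. x i = 0) \<and> (\<Sum>i\<le>n. (x i)^2) \<le> 1}"
definition Sn :: "nat \<Rightarrow> (nat \<Rightarrow> real) set" where
  "Sn n = {x. (\<Sum>i\<le>n. x i ^ 2) = 1 \<and> (\<forall>i>n. x i = 0)}"

lemma not_contractible_Sn: "\<not> contractible (Sn n)"
proof -
  have "nsphere n = top_of_set (Sn n)"
    by (simp add: nsphere Sn_def euclidean_product_topology)
  then show ?thesis using non_contractible_space_nsphere[of n] by simp
qed

lemma sumsq_zero_imp:
  fixes n :: nat and v :: "nat \<Rightarrow> real"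
  assumes "(\<Sum>i\<le>n. (v i)^2) = 0" "i \<le> n" shows "v i = 0"
proof -
  have "\<forall>i\<in>{..n}. (v i)^2 = 0" using assms sum_nonneg_eq_0_iff[of "{..n}" "\<lambda>i. (v i)^2"] by auto
  then show ?thesis using assms by simp
qed

lemma cont_coord: "continuous_on S (\<lambda>x::nat\<Rightarrow>real. x i)"
  by (rule continuous_on_subset[OF continuous_on_product_coordinates]) auto

lemma brouwer_nat:
  fixes f :: "(nat \<Rightarrow> real) \<Rightarrow> (nat \<Rightarrow> real)"
  assumes contf: "continuous_on (Dn n) f" and fD: "\<And>x. x \<in> Dn n \<Longrightarrow> f x \<in> Dn n"
  shows "\<exists>x\<in>Dn n. f x = x"
proof (rule ccontr)
  assume nofix: "\<not> (\<exists>x\<in>Dn n. f x = x)"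
  define nr where "nr x = sqrt (\<Sum>i\<le>n. (x i - f x i)^2)" for x
  define g where "g x = (\<lambda>i. (x i - f x i) / nr x)" for x
  have nrpos: "nr x > 0" if "x \<in> Dn n" for x
  proof (rule ccontr)
    assume "\<not> nr x > 0"
    then have "(\<Sum>i\<le>n. (x i - f x i)^2) = 0"
      unfolding nr_def by (metis (no_types, lifting) real_sqrt_gt_zero sum_nonneg zero_le_power2 order_le_less)
    then have "x i = f x i" if "i \<le> n" for i using sumsq_zero_imp[where n=n and v="\<lambda>i. x i - f x i"] that by auto
    moreover have "x i = f x i" if "i > n" for i using fD[OF \<open>x \<in> Dn n\<close>] \<open>x \<in> Dn n\<close> that
      by (auto simp: Dn_def)
    ultimately have "f x = x" by (metis not_le ext)
    with nofix \<open>x \<in> Dn n\<close> show False by auto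
  qed
  have gS: "g x \<in> Sn n" if "x \<in> Dn n" for x
  proof -
    have p: "nr x > 0" using nrpos that .
    have "(\<Sum>i\<le>n. (g x i)^2) = (\<Sum>i\<le>n. (x i - f x i)^2) / (nr x)^2"
      by (simp add: g_def power_divide sum_divide_distrib)
    also have "\<dots> = 1" using p unfolding nr_def
      by (simp add: sum_nonneg)
    finally show ?thesis using that fD[OF that] by (auto simp: Sn_def Dn_def g_def)
  qed
  have cf: "continuous_on (Dn n) (\<lambda>x. f x i)" for i
    using continuous_on_product_then_coordinatewise[OF contf] .
  have contnr: "continuous_on (Dn n) nr" unfolding nr_def
    by (intro continuous_intros cont_coord cf)
  have contg: "continuous_on (Dn n) g" unfolding g_def
    apply (rule continuous_on_coordinatewise_then_product)
    apply (intro continuous_intros cont_coord cf contnr)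
    using nrpos by force
  have SD: "Sn n \<subseteq> Dn n" by (auto simp: Sn_def Dn_def)
  have zD: "(\<lambda>i. 0) \<in> Dn n" by (simp add: Dn_def)
  have H1: "homotopic_with_canon (\<lambda>h. True) (Sn n) (Sn n) g (\<lambda>x. g (\<lambda>i. 0))"
  proof (rule homotopic_canonI[where h = "\<lambda>z. g (\<lambda>i. (1 - fst z) * snd z i)"])
    have inD: "(\<lambda>i. (1 - fst z) * snd z i) \<in> Dn n" if zz: "z \<in> {0..1} \<times> Sn n" for z
    proof -
      obtain t x where z: "z = (t,x)" "t \<in> {0..1}" "x \<in> Sn n" using zz by auto
      have "(\<Sum>i\<le>n. ((1-t) * x i)^2) = (1-t)^2 * (\<Sum>i\<le>n. (x i)^2)"
        by (simp add: power_mult_distrib sum_distrib_left)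
      also have "\<dots> = (1-t)^2" using z by (simp add: Sn_def)
      also have "\<dots> \<le> 1" using z by (intro power_le_one) auto
      finally show ?thesis using z by (auto simp: Dn_def Sn_def)
    qed
    show "continuous_on ({0..1} \<times> Sn n) (\<lambda>z. g (\<lambda>i. (1 - fst z) * snd z i))"
      apply (rule continuous_on_compose2[OF contg])
       apply (rule continuous_on_coordinatewise_then_product)
       apply (intro continuous_intros)
       apply (rule continuous_on_compose2[OF cont_coord[of UNIV]])
        apply (intro continuous_intros)
      using inD by auto
    show "(\<lambda>z. g (\<lambda>i. (1 - fst z) * snd z i)) \<in> {0..1} \<times> Sn n \<rightarrow> Sn n"
      using inD gS by auto
  qed auto
  define v where "v z = (\<lambda>i. (1 - fst z) * snd z i + fst z * g (snd z) i)" for z :: "real \<times> (nat \<Rightarrow> real)"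
  define nv where "nv z = sqrt (\<Sum>i\<le>n. (v z i)^2)" for z
  have dotpos: "(\<Sum>i\<le>n. x i * (x i - f x i)) > 0" if "x \<in> Sn n" for x
  proof -
    have xD: "x \<in> Dn n" using SD that by auto
    have e1: "(\<Sum>i\<le>n. (x i - f x i)^2) = (\<Sum>i\<le>n. (x i)^2) - 2*(\<Sum>i\<le>n. x i * f x i) + (\<Sum>i\<le>n. (f x i)^2)"
      by (simp add: power2_diff sum.distrib sum_subtractf sum_distrib_left mult.assoc)
    have e2: "(\<Sum>i\<le>n. x i * (x i - f x i)) = (\<Sum>i\<le>n. (x i)^2) - (\<Sum>i\<le>n. x i * f x i)"
      by (simp add: right_diff_distrib sum_subtractf power2_eq_square)
    have s1: "(\<Sum>i\<le>n. (x i)^2) = 1" using that by (simp add: Sn_def)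
    have s2: "(\<Sum>i\<le>n. (f x i)^2) \<le> 1" using fD[OF xD] by (simp add: Dn_def)
    have "nr x ^2 = (\<Sum>i\<le>n. (x i - f x i)^2)" unfolding nr_def by (simp add: sum_nonneg)
    moreover have "nr x > 0" using nrpos xD by auto
    ultimately have "(\<Sum>i\<le>n. (x i - f x i)^2) > 0" by (metis zero_less_power)
    with e1 e2 s1 s2 show ?thesis by linarith
  qed
  have vpos: "(\<Sum>i\<le>n. snd z i * v z i) > 0" if zz: "z \<in> {0..1} \<times> Sn n" for z
  proof -
    obtain t x where z: "z = (t,x)" "t \<in> {0..1}" "x \<in> Sn n" using zz by auto
    have xD: "x \<in> Dn n" using SD z by auto
    have "(\<Sum>i\<le>n. x i * v z i) = (1 - t) * (\<Sum>i\<le>n. (x i)^2) + t * (\<Sum>i\<le>n. x i * (x i - f x i)) / nr x"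
    proof -
      have "x i * v z i = (1 - t) * (x i)^2 + t * (x i * (x i - f x i)) / nr x" for i
        using nrpos[OF xD] by (simp add: v_def g_def z field_simps power2_eq_square)
      then show ?thesis by (simp add: sum.distrib sum_distrib_left sum_divide_distrib)
    qed
    also have "\<dots> > 0"
    proof -
      have s1: "(\<Sum>i\<le>n. (x i)^2) = 1" using z by (simp add: Sn_def)
      have "t * (\<Sum>i\<le>n. x i * (x i - f x i)) / nr x \<ge> 0"
        using z dotpos[of x] nrpos[OF xD] by auto
      moreover have "t * (\<Sum>i\<le>n. x i * (x i - f x i)) / nr x > 0" if "t > 0"
        using z dotpos[of x] nrpos[OF xD] that by auto
      ultimately show ?thesis using s1 z(2) by (cases "t = 0") auto
    qed
    finally show ?thesis using z by simp
  qed
  have nvpos: "nv z > 0" if "z \<in> {0..1} \<times> Sn n" for z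
  proof (rule ccontr)
    assume "\<not> nv z > 0"
    then have "(\<Sum>i\<le>n. (v z i)^2) = 0"
      unfolding nv_def by (metis (no_types, lifting) real_sqrt_gt_zero sum_nonneg zero_le_power2 order_le_less)
    then have "v z i = 0" if "i \<le> n" for i using sumsq_zero_imp[where n=n and v="v z"] that by auto
    then have "(\<Sum>i\<le>n. snd z i * v z i) = 0" by simp
    with vpos[OF that] show False by simp
  qed
  have H2: "homotopic_with_canon (\<lambda>h. True) (Sn n) (Sn n) id g"
  proof (rule homotopic_canonI[where h = "\<lambda>z. (\<lambda>i. v z i / nv z)"])
    have contv: "continuous_on ({0..1} \<times> Sn n) (\<lambda>z. v z i)" for i
      unfolding v_def
      apply (intro continuous_intros)
       apply (rule continuous_on_compose2[OF cont_coord[of UNIV]])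
        apply (intro continuous_intros)
       apply simp
      apply (rule continuous_on_compose2[OF continuous_on_product_then_coordinatewise[OF contg]])
       apply (intro continuous_intros)
      using SD by auto
    have contnv: "continuous_on ({0..1} \<times> Sn n) nv" unfolding nv_def
      by (intro continuous_intros contv)
    show "continuous_on ({0..1} \<times> Sn n) (\<lambda>z. (\<lambda>i. v z i / nv z))"
      apply (rule continuous_on_coordinatewise_then_product)
      apply (intro continuous_intros contv contnv)
      using nvpos by force
    show "(\<lambda>z. (\<lambda>i. v z i / nv z)) \<in> {0..1} \<times> Sn n \<rightarrow> Sn n"
    proof
      fix z :: "real \<times> (nat \<Rightarrow> real)" assume z: "z \<in> {0..1} \<times> Sn n"
      have p: "nv z > 0" using nvpos z .
      have "(\<Sum>i\<le>n. (v z i / nv z)^2) = (\<Sum>i\<le>n. (v z i)^2) / (nv z)^2"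
        by (simp add: power_divide sum_divide_distrib)
      also have "\<dots> = 1" using p unfolding nv_def by (simp add: sum_nonneg)
      finally show "(\<lambda>i. v z i / nv z) \<in> Sn n"
        using z gS[of "snd z"] SD by (auto simp: Sn_def v_def)
    qed
    show "(\<lambda>i. v (0, x) i / nv (0, x)) = id x" if "x \<in> Sn n" for x
    proof -
      have "nv (0,x) = 1" using that by (simp add: nv_def v_def Sn_def)
      then show ?thesis by (simp add: v_def)
    qed
    show "(\<lambda>i. v (1, x) i / nv (1, x)) = g x" if "x \<in> Sn n" for x
    proof -
      have "nv (1,x) = 1" using that gS[of x] SD by (auto simp: nv_def v_def Sn_def)
      then show ?thesis by (simp add: v_def)
    qed
  qed
  have "contractible (Sn n)"
    unfolding contractible_def using homotopic_with_trans[OF H2 H1] by blast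
  with not_contractible_Sn show False by blast
qed

lemma kern_alt: "kern t s = 2/pi * cos (pi/2 * (1 - max t s)) * cos (pi/2 * min t s)"
  by (simp add: kern_def max_def min_def)

lemma kern_bound: "\<bar>kern t s\<bar> \<le> 1"
proof -
  have "\<bar>kern t s\<bar> = 2/pi * (\<bar>cos (pi/2 * (1 - max t s))\<bar> * \<bar>cos (pi/2 * min t s)\<bar>)"
    by (simp add: kern_alt abs_mult)
  also have "\<dots> \<le> 2/pi * 1"
    by (intro mult_left_mono mult_le_one) (auto simp: abs_cos_le_one)
  also have "\<dots> \<le> 1" using pi_ge_two by simp
  finally show ?thesis .
qed

lemma cont_kern: "continuous_on S (\<lambda>s. kern t s)"
  unfolding kern_alt by (intro continuous_intros)

lemma cos_lip: fixes a b :: real shows "\<bar>cos a - cos b\<bar> \<le> \<bar>a - b\<bar>"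
proof -
  have "\<bar>cos a - cos b\<bar> = \<bar>2 * sin ((a + b)/2) * sin ((b - a)/2)\<bar>"
    by (simp add: cos_diff_cos)
  also have "\<dots> \<le> 2 * 1 * \<bar>sin ((b - a)/2)\<bar>"
    by (simp add: abs_mult, rule mult_left_le_one_le) auto
  also have "\<dots> \<le> 2 * \<bar>(b - a)/2\<bar>" using abs_sin_x_le_abs_x[of "(b - a)/2"] by simp
  finally show ?thesis by simp
qed

lemma abs_scale: fixes p a b :: real assumes "p \<ge> 0" shows "\<bar>p * a - p * b\<bar> = p * \<bar>a - b\<bar>"
proof -
  have "p * a - p * b = p * (a - b)" by (simp add: right_diff_distrib)
  then show ?thesis using assms by (simp add: abs_mult)
qed

lemma kern_lip: "\<bar>kern t s - kern t' s\<bar> \<le> 2 * \<bar>t - t'\<bar>"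
proof -
  define a where "a = cos (pi/2 * (1 - max t s))"
  define a' where "a' = cos (pi/2 * (1 - max t' s))"
  define b where "b = cos (pi/2 * min t s)"
  define b' where "b' = cos (pi/2 * min t' s)"
  have "\<bar>max t s - max t' s\<bar> \<le> \<bar>t - t'\<bar>" "\<bar>min t s - min t' s\<bar> \<le> \<bar>t - t'\<bar>"
    by (auto simp: max_def min_def)
  note mm = this
  from mm have m1: "\<bar>max t s - max t' s\<bar> \<le> \<bar>t - t'\<bar>" and m2: "\<bar>min t s - min t' s\<bar> \<le> \<bar>t - t'\<bar>" by auto
  have "\<bar>a - a'\<bar> \<le> \<bar>pi/2 * (1 - max t s) - pi/2 * (1 - max t' s)\<bar>"
    unfolding a_def a'_def by (rule cos_lip)
  also have "\<dots> = pi/2 * \<bar>(1 - max t s) - (1 - max t' s)\<bar>"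
    by (rule abs_scale) simp
  also have "\<dots> = pi/2 * \<bar>max t s - max t' s\<bar>"
    by (simp add: abs_minus_commute)
  also have "\<dots> \<le> pi/2 * \<bar>t - t'\<bar>" using m1 by (intro mult_left_mono) auto
  finally have ha: "\<bar>a - a'\<bar> \<le> pi/2 * \<bar>t - t'\<bar>" .
  have "\<bar>b - b'\<bar> \<le> \<bar>pi/2 * min t s - pi/2 * min t' s\<bar>"
    unfolding b_def b'_def by (rule cos_lip)
  also have "\<dots> = pi/2 * \<bar>min t s - min t' s\<bar>"
    by (rule abs_scale) simp
  also have "\<dots> \<le> pi/2 * \<bar>t - t'\<bar>" using m2 by (intro mult_left_mono) auto
  finally have hb: "\<bar>b - b'\<bar> \<le> pi/2 * \<bar>t - t'\<bar>" .
  have "\<bar>a * b - a' * b'\<bar> = \<bar>(a - a') * b + a' * (b - b')\<bar>" by (simp add: algebra_simps)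
  also have "\<dots> \<le> \<bar>a - a'\<bar> * \<bar>b\<bar> + \<bar>a'\<bar> * \<bar>b - b'\<bar>" by (simp add: abs_mult abs_triangle_ineq[THEN order_trans])
  also have "\<dots> \<le> \<bar>a - a'\<bar> * 1 + 1 * \<bar>b - b'\<bar>"
    by (intro add_mono mult_left_mono mult_right_mono) (auto simp: a'_def b_def abs_cos_le_one)
  also have "\<dots> \<le> pi * \<bar>t - t'\<bar>" using ha hb by simp
  finally have *: "\<bar>a * b - a' * b'\<bar> \<le> pi * \<bar>t - t'\<bar>" .
  have "kern t s = 2/pi * (a * b)" "kern t' s = 2/pi * (a' * b')"
    by (simp_all add: kern_alt a_def a'_def b_def b'_def)
  then have "\<bar>kern t s - kern t' s\<bar> = 2/pi * \<bar>a * b - a' * b'\<bar>"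
    by (simp only:) (rule abs_scale, simp)
  also have "\<dots> \<le> 2/pi * (pi * \<bar>t - t'\<bar>)" using * by (intro mult_left_mono) auto
  finally show ?thesis by simp
qed

lemma int01_le_const:
  fixes f :: "real \<Rightarrow> real"
  assumes "f integrable_on {0..1}" "\<And>x. x \<in> {0..1} \<Longrightarrow> f x \<le> M"
  shows "integral {0..1} f \<le> M"
  using integral_le[OF assms(1) integrable_const_ivl[of M 0 1]] assms by simp

lemma int01_ge_const:
  fixes f :: "real \<Rightarrow> real"
  assumes "f integrable_on {0..1}" "\<And>x. x \<in> {0..1} \<Longrightarrow> M \<le> f x"
  shows "M \<le> integral {0..1} f"
  using integral_le[OF integrable_const_ivl[of M 0 1] assms(1)] assms by simp

lemma int01_bound:
  fixes f :: "real \<Rightarrow> real"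
  assumes "f integrable_on {0..1}" "\<And>x. x \<in> {0..1} \<Longrightarrow> \<bar>f x\<bar> \<le> M"
  shows "\<bar>integral {0..1} f\<bar> \<le> M"
proof -
  have "integral {0..1} f \<le> M" using assms by (intro int01_le_const) (auto simp: abs_le_iff)
  moreover have "-M \<le> integral {0..1} f" using assms by (intro int01_ge_const) (force simp: abs_le_iff)+
  ultimately show ?thesis by simp
qed

lemma exp_lip: fixes a b :: real shows "\<bar>exp a - exp b\<bar> \<le> exp (max a b) * \<bar>a - b\<bar>"
proof -
  have 1: "exp x - exp y \<le> exp x * (x - y)" for x y :: real
  proof -
    have "exp y = exp x * exp (y - x)" by (simp add: exp_diff)
    also have "\<dots> \<ge> exp x * (1 + (y - x))" using exp_ge_add_one_self[of "y - x"] by (intro mult_left_mono) auto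
    finally show ?thesis by (simp add: algebra_simps)
  qed
  show ?thesis
  proof (cases "a \<le> b")
    case True
    then have "exp a \<le> exp b" by simp
    then show ?thesis using 1[of b a] True by (simp add: max_def abs_if)
  next
    case False
    then have "exp b \<le> exp a" by simp
    then show ?thesis using 1[of a b] False by (simp add: max_def abs_if)
  qed
qed

definition Zf :: "(real \<Rightarrow> real) \<Rightarrow> real" where
  "Zf u = integral {0..1} (\<lambda>x. exp (u x))"
definition F :: "(real \<Rightarrow> real) \<Rightarrow> real \<Rightarrow> real" where
  "F u t = integral {0..1} (\<lambda>s. kern t s * (sin (3 / 2 * pi * s) * exp (u s) / Zf u))"
definition NF :: "(real \<Rightarrow> real) \<Rightarrow> real" where
  "NF u = supnorm01 (F u)"
definition Bd :: "real \<Rightarrow> (real \<Rightarrow> real) \<Rightarrow> bool" where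
  "Bd r u \<longleftrightarrow> continuous_on {0..1} u \<and> (\<forall>t\<in>{0..1}. \<bar>u t\<bar> \<le> r)"

lemma Bd_cont: "Bd r u \<Longrightarrow> continuous_on {0..1} u" by (simp add: Bd_def)
lemma Bd_le: "Bd r u \<Longrightarrow> t \<in> {0..1} \<Longrightarrow> \<bar>u t\<bar> \<le> r" by (simp add: Bd_def)

lemma Zf_bounds:
  assumes "Bd r u"
  shows "exp (-r) \<le> Zf u" "Zf u \<le> exp r"
proof -
  have c: "continuous_on {0..1} (\<lambda>x. exp (u x))" using Bd_cont[OF assms] by (intro continuous_intros)
  have i: "(\<lambda>x. exp (u x)) integrable_on {0..1}" by (rule integrable_continuous_interval[OF c])
  show "exp (-r) \<le> Zf u" unfolding Zf_def
  proof (rule int01_ge_const[OF i])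
    fix x :: real assume "x \<in> {0..1}"
    then have "\<bar>u x\<bar> \<le> r" by (rule Bd_le[OF assms])
    then show "exp (-r) \<le> exp (u x)" by simp
  qed
  show "Zf u \<le> exp r" unfolding Zf_def
  proof (rule int01_le_const[OF i])
    fix x :: real assume "x \<in> {0..1}"
    then have "\<bar>u x\<bar> \<le> r" by (rule Bd_le[OF assms])
    then show "exp (u x) \<le> exp r" by simp
  qed
qed

lemma Zf_pos: "Bd r u \<Longrightarrow> Zf u > 0"
  using Zf_bounds(1)[of r u] exp_gt_zero[of "-r"] by linarith

lemma w_bounds:
  assumes "Bd r u" "s \<in> {0..1}"
  shows "exp (-2*r) \<le> exp (u s) / Zf u" "exp (u s) / Zf u \<le> exp (2*r)"
proof -
  have us: "-r \<le> u s" "u s \<le> r" using Bd_le[OF assms] by (auto simp: abs_le_iff)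
  have Z: "exp (-r) \<le> Zf u" "Zf u \<le> exp r" using Zf_bounds[OF assms(1)] by auto
  have "exp (-r) / exp r \<le> exp (u s) / Zf u"
    by (rule frac_le) (use us Z Zf_pos[OF assms(1)] in auto)
  moreover have "exp (-r) / exp r = exp (-2*r)" by (simp add: exp_diff[symmetric])
  ultimately show "exp (-2*r) \<le> exp (u s) / Zf u" by simp
  have "exp (u s) / Zf u \<le> exp r / exp (-r)"
    by (rule frac_le) (use us Z Zf_pos[OF assms(1)] in auto)
  moreover have "exp r / exp (-r) = exp (2*r)" by (simp add: exp_diff[symmetric])
  ultimately show "exp (u s) / Zf u \<le> exp (2*r)" by simp
qed

lemma integrand_cont:
  assumes "Bd r u"
  shows "continuous_on {0..1} (\<lambda>s. kern t s * (sin (3 / 2 * pi * s) * exp (u s) / Zf u))"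
proof -
  have "Zf u \<noteq> 0" using Zf_pos[OF assms] by simp
  then show ?thesis using Bd_cont[OF assms]
    by (intro continuous_intros cont_kern) auto
qed

lemma integrand_int:
  assumes "Bd r u"
  shows "(\<lambda>s. kern t s * (sin (3 / 2 * pi * s) * exp (u s) / Zf u)) integrable_on {0..1}"
  by (rule integrable_continuous_interval[OF integrand_cont[OF assms]])

lemma integrand_bound:
  assumes "Bd r u" "s \<in> {0..1}"
  shows "\<bar>kern t s * (sin (3 / 2 * pi * s) * exp (u s) / Zf u)\<bar> \<le> exp (2*r)"
proof -
  have "\<bar>kern t s * (sin (3 / 2 * pi * s) * exp (u s) / Zf u)\<bar>
      = \<bar>kern t s\<bar> * \<bar>sin (3 / 2 * pi * s)\<bar> * (exp (u s) / Zf u)"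
    using Zf_pos[OF assms(1)] by (simp add: abs_mult)
  also have "\<dots> \<le> 1 * 1 * exp (2*r)"
    using w_bounds[OF assms] kern_bound[of t s] Zf_pos[OF assms(1)]
    by (intro mult_mono) auto
  finally show ?thesis by simp
qed

lemma F_bound:
  assumes "Bd r u"
  shows "\<bar>F u t\<bar> \<le> exp (2*r)"
  unfolding F_def using integrand_int[OF assms] integrand_bound[OF assms]
  by (intro int01_bound) auto

lemma F_lip:
  assumes "Bd r u"
  shows "\<bar>F u t - F u t'\<bar> \<le> 2 * exp (2*r) * \<bar>t - t'\<bar>"
proof -
  have "F u t - F u t' = integral {0..1} (\<lambda>s. kern t s * (sin (3 / 2 * pi * s) * exp (u s) / Zf u) - kern t' s * (sin (3 / 2 * pi * s) * exp (u s) / Zf u))"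
    unfolding F_def by (rule integral_diff[symmetric]) (intro integrand_int[OF assms])+
  also have "\<bar>\<dots>\<bar> \<le> 2 * exp (2*r) * \<bar>t - t'\<bar>"
  proof (rule int01_bound)
    show "(\<lambda>s. kern t s * (sin (3 / 2 * pi * s) * exp (u s) / Zf u) - kern t' s * (sin (3 / 2 * pi * s) * exp (u s) / Zf u)) integrable_on {0..1}"
      by (intro integrable_diff integrand_int[OF assms])
    fix s :: real assume s: "s \<in> {0..1}"
    define X where "X = sin (3 / 2 * pi * s) * exp (u s) / Zf u"
    have "\<bar>X\<bar> = \<bar>sin (3 / 2 * pi * s)\<bar> * (exp (u s) / Zf u)"
      using Zf_pos[OF assms(1)] by (simp add: X_def abs_mult)
    also have "\<dots> \<le> 1 * exp (2*r)"
      using w_bounds[OF assms s] Zf_pos[OF assms(1)] by (intro mult_mono) auto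
    finally have X: "\<bar>X\<bar> \<le> exp (2*r)" by simp
    have "\<bar>kern t s * X - kern t' s * X\<bar> = \<bar>kern t s - kern t' s\<bar> * \<bar>X\<bar>"
      by (simp add: abs_mult flip: left_diff_distrib)
    also have "\<dots> \<le> (2 * \<bar>t - t'\<bar>) * exp (2*r)"
      using X kern_lip[of t s t'] by (intro mult_mono) auto
    finally have "\<bar>kern t s * X - kern t' s * X\<bar> \<le> (2 * \<bar>t - t'\<bar>) * exp (2*r)" .
    then have "\<bar>kern t s * (sin (3 / 2 * pi * s) * exp (u s) / Zf u) - kern t' s * (sin (3 / 2 * pi * s) * exp (u s) / Zf u)\<bar> \<le> (2 * \<bar>t - t'\<bar>) * 1 * exp (2*r)"
      by (simp add: X_def)
    then show "\<bar>kern t s * (sin (3 / 2 * pi * s) * exp (u s) / Zf u) - kern t' s * (sin (3 / 2 * pi * s) * exp (u s) / Zf u)\<bar> \<le> 2 * exp (2*r) * \<bar>t - t'\<bar>"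
      by (simp add: mult_ac)
  qed
  finally show ?thesis .
qed

definition hh :: "real \<Rightarrow> real" where "hh s = cos (pi/2 * s) * sin (3/2 * pi * s)"
definition HH :: "real \<Rightarrow> real" where "HH s = -(cos (2*pi* s) / (4*pi)) - cos (pi* s) / (2*pi)"

lemma HH_deriv: "(HH has_real_derivative hh s) (at s)"
proof -
  have "(HH has_real_derivative (sin (2*pi* s) * (2*pi) / (4*pi) + sin (pi* s) * pi / (2*pi))) (at s)"
    unfolding HH_def by (auto intro!: derivative_eq_intros simp: field_simps)
  moreover have "sin (2*pi* s) * (2*pi) / (4*pi) + sin (pi* s) * pi / (2*pi) = hh s"
  proof -
    have a: "2*pi* s = 3/2*pi* s + pi/2* s" and b: "pi* s = 3/2*pi* s - pi/2* s" by (simp_all add: field_simps)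
    have "sin (2*pi* s) + sin (pi* s) = 2 * hh s"
      unfolding hh_def by (subst a, subst b, simp only: sin_add sin_diff) (simp add: algebra_simps)
    then show ?thesis by (simp add: field_simps)
  qed
  ultimately show ?thesis by simp
qed

lemma hh_integral: "a \<le> b \<Longrightarrow> (hh has_integral (HH b - HH a)) {a..b}"
  by (rule fundamental_theorem_of_calculus)
     (auto intro: has_field_derivative_at_within[OF HH_deriv] simp: has_real_derivative_iff_has_vector_derivative[symmetric])

lemma cos_2pi3: "cos (pi*(2/3)) = -1/2"
proof -
  have "pi*(2/3) = pi - pi/3" by simp
  then have "cos (pi*(2/3)) = cos (pi - pi/3)" by (rule arg_cong)
  also have "\<dots> = -1/2" by (simp only: cos_pi_minus cos_60)
  finally show ?thesis .
qed

lemma cos_4pi3: "cos (2*pi*(2/3)) = -1/2"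
proof -
  have "2*pi*(2/3) = pi/3 + pi" by simp
  then have "cos (2*pi*(2/3)) = cos (pi/3 + pi)" by (rule arg_cong)
  also have "\<dots> = -1/2" by (simp only: cos_periodic_pi cos_60)
  finally show ?thesis .
qed

lemma int_hh_1: "integral {0..2/3} hh = 9 / (8*pi)"
proof -
  have "integral {0..2/3} hh = HH (2/3) - HH 0" using hh_integral[of 0 "2/3"] by (simp add: integral_unique)
  also have "HH (2/3) = 1/(8*pi) + 1/(4*pi)"
    unfolding HH_def by (subst cos_2pi3, subst cos_4pi3) (simp add: field_simps)
  also have "HH 0 = - 1/(4*pi) - 1/(2*pi)" by (simp add: HH_def)
  finally show ?thesis by (simp add: field_simps)
qed

lemma int_hh_2: "integral {2/3..1} hh = - 1 / (8*pi)"
proof -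
  have "integral {2/3..1} hh = HH 1 - HH (2/3)" using hh_integral[of "2/3" 1] by (simp add: integral_unique)
  also have "HH (2/3) = 1/(8*pi) + 1/(4*pi)"
    unfolding HH_def by (subst cos_2pi3, subst cos_4pi3) (simp add: field_simps)
  also have "HH 1 = - 1/(4*pi) + 1/(2*pi)" by (simp add: HH_def)
  finally show ?thesis by (simp add: field_simps)
qed

lemma hh_nonneg: assumes s: "s \<in> {0..2/3}" shows "hh s \<ge> 0"
proof -
  have a: "0 \<le> pi/2 * s" "pi/2 * s \<le> pi/2 * 1" using s by (auto intro!: mult_left_mono)
  have b: "0 \<le> pi * (3/2 * s)" "pi * (3/2 * s) \<le> pi * 1" using s by (auto intro!: mult_left_mono)
  have "0 \<le> cos (pi/2 * s)" by (rule cos_ge_zero) (use a pi_gt_zero in linarith)+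
  moreover have "0 \<le> sin (pi * (3/2 * s))" using b by (intro sin_ge_zero) auto
  ultimately show ?thesis unfolding hh_def by (simp add: mult_ac)
qed

lemma hh_nonpos: assumes s: "s \<in> {2/3..1}" shows "hh s \<le> 0"
proof -
  have a: "0 \<le> pi/2 * s" "pi/2 * s \<le> pi/2 * 1" using s by (auto intro!: mult_left_mono)
  have b: "pi * 1 \<le> pi * (3/2 * s)" "pi * (3/2 * s) \<le> pi * (3/2)" using s by (auto intro!: mult_left_mono)
  have "0 \<le> cos (pi/2 * s)" by (rule cos_ge_zero) (use a pi_gt_zero in linarith)+
  moreover have "sin (pi * (3/2 * s)) \<le> 0" using b pi_gt_zero by (intro sin_le_zero) auto
  ultimately show ?thesis unfolding hh_def by (simp add: mult_ac mult_nonneg_nonpos)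
qed

lemma F_at_1:
  assumes "Bd r u"
  shows "F u 1 \<ge> (9 * exp (-2*r) - exp (2*r)) / (4 * pi^2)"
proof -
  define w where "w s = exp (u s) / Zf u" for s
  define \<phi> where "\<phi> s = 2/pi * hh s * w s" for s
  have Feq: "F u 1 = integral {0..1} \<phi>"
    unfolding F_def
  proof (rule integral_cong)
    fix s :: real assume "s \<in> {0..1}"
    then have "kern 1 s = 2/pi * cos (pi/2 * s)" by (simp add: kern_alt)
    then show "kern 1 s * (sin (3 / 2 * pi * s) * exp (u s) / Zf u) = \<phi> s"
      by (simp add: \<phi>_def hh_def w_def)
  qed
  have cw: "continuous_on {0..1} w" unfolding w_def
    using Bd_cont[OF assms] Zf_pos[OF assms] by (intro continuous_intros) auto
  have cphi: "continuous_on {0..1} \<phi>" unfolding \<phi>_def hh_def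
    by (intro continuous_intros cw)
  have "integral {0..1} \<phi> = integral {0..2/3} \<phi> + integral {2/3..1} \<phi>"
    using Henstock_Kurzweil_Integration.integral_combine[where a=0 and c="2/3" and b=1 and f=\<phi>] integrable_continuous_interval[OF cphi] by simp
  moreover have "integral {0..2/3} \<phi> \<ge> 2/pi * exp (-2*r) * integral {0..2/3} hh"
  proof -
    have "integral {0..2/3} (\<lambda>s. 2/pi * exp (-2*r) * hh s) \<le> integral {0..2/3} \<phi>"
    proof (rule integral_le)
      show "(\<lambda>s. 2/pi * exp (-2*r) * hh s) integrable_on {0..2/3}"
        unfolding hh_def by (intro integrable_continuous_interval continuous_intros)
      show "\<phi> integrable_on {0..2/3}"
        by (rule integrable_continuous_interval) (rule continuous_on_subset[OF cphi], auto)
      fix s :: real assume s: "s \<in> {0..2/3}"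
      then have "exp (-2*r) \<le> w s" using w_bounds(1)[OF assms, of s] by (auto simp: w_def)
      then have "hh s * exp (-2*r) \<le> hh s * w s" using hh_nonneg[OF s] by (intro mult_left_mono) auto
      then have "2/pi * (hh s * exp (-2*r)) \<le> 2/pi * (hh s * w s)" by (rule mult_left_mono) auto
      then show "2/pi * exp (-2*r) * hh s \<le> \<phi> s" unfolding \<phi>_def
        by (simp add: mult_ac)
    qed
    then show ?thesis by simp
  qed
  moreover have "integral {2/3..1} \<phi> \<ge> 2/pi * exp (2*r) * integral {2/3..1} hh"
  proof -
    have "integral {2/3..1} (\<lambda>s. 2/pi * exp (2*r) * hh s) \<le> integral {2/3..1} \<phi>"
    proof (rule integral_le)
      show "(\<lambda>s. 2/pi * exp (2*r) * hh s) integrable_on {2/3..1}"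
        unfolding hh_def by (intro integrable_continuous_interval continuous_intros)
      show "\<phi> integrable_on {2/3..1}"
        by (rule integrable_continuous_interval) (rule continuous_on_subset[OF cphi], auto)
      fix s :: real assume s: "s \<in> {2/3..1}"
      then have "w s \<le> exp (2*r)" using w_bounds(2)[OF assms, of s] by (auto simp: w_def)
      then have "hh s * exp (2*r) \<le> hh s * w s" using hh_nonpos[OF s] by (intro mult_left_mono_neg) auto
      then have "2/pi * (hh s * exp (2*r)) \<le> 2/pi * (hh s * w s)" by (rule mult_left_mono) auto
      then show "2/pi * exp (2*r) * hh s \<le> \<phi> s" unfolding \<phi>_def
        by (simp add: mult_ac)
    qed
    then show ?thesis by simp
  qed
  ultimately have "F u 1 \<ge> 2/pi * exp (-2*r) * (9 / (8*pi)) + 2/pi * exp (2*r) * (- 1 / (8*pi))"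
    using Feq int_hh_1 int_hh_2 by simp
  also have "2/pi * exp (-2*r) * (9 / (8*pi)) + 2/pi * exp (2*r) * (- 1 / (8*pi)) = (9 * exp (-2*r) - exp (2*r)) / (4 * pi^2)"
    by (simp add: field_simps power2_eq_square)
  finally show ?thesis .
qed

lemma bdd_F: "Bd r u \<Longrightarrow> bdd_above ((\<lambda>t. \<bar>F u t\<bar>) ` {0..1})"
  by (rule bdd_aboveI2[where M="exp (2*r)"]) (rule F_bound)

lemma NF_ge: "Bd r u \<Longrightarrow> t \<in> {0..1} \<Longrightarrow> \<bar>F u t\<bar> \<le> NF u"
  unfolding NF_def supnorm01_def by (rule cSUP_upper) (auto intro: bdd_F)

lemma NF_le: "Bd r u \<Longrightarrow> NF u \<le> exp (2*r)"
  unfolding NF_def supnorm01_def by (rule cSUP_least) (auto intro: F_bound)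

lemma ratio_lip:
  fixes A B P Q r d :: real
  assumes r: "0 \<le> r" and d: "0 \<le> d" and P: "exp (-r) \<le> P" and Q: "exp (-r) \<le> Q"
    and B: "0 < B" "B \<le> exp r" and AB: "\<bar>A - B\<bar> \<le> exp r * d" and PQ: "\<bar>P - Q\<bar> \<le> exp r * d"
  shows "\<bar>A / P - B / Q\<bar> \<le> 2 * exp (4*r) * d"
proof -
  have Pp: "P > 0" and Qp: "Q > 0" using P Q exp_gt_zero[of "-r"] by linarith+
  have eq: "A / P - B / Q = (A - B) / P + B * (Q - P) / (P * Q)"
    using Pp Qp by (simp add: field_simps)
  have 1: "\<bar>(A - B) / P\<bar> \<le> exp (2*r) * d"
  proof -
    have "\<bar>(A - B) / P\<bar> = \<bar>A - B\<bar> / P" using Pp by simp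
    also have "\<dots> \<le> (exp r * d) / exp (-r)"
      by (rule frac_le) (use AB P d in auto)
    also have "\<dots> = exp (2*r) * d" by (simp add: exp_minus field_simps flip: exp_add)
    finally show ?thesis .
  qed
  have 2: "\<bar>B * (Q - P) / (P * Q)\<bar> \<le> exp (4*r) * d"
  proof -
    have "\<bar>B * (Q - P) / (P * Q)\<bar> = B * \<bar>P - Q\<bar> / (P * Q)" using Pp Qp B
      by (simp add: abs_mult abs_minus_commute)
    also have "\<dots> \<le> (exp r * (exp r * d)) / (exp (-r) * exp (-r))"
      by (rule frac_le) (use B PQ P Q Pp Qp in \<open>auto intro!: mult_mono\<close>)
    also have "\<dots> = exp (4*r) * d" by (simp add: exp_minus field_simps flip: exp_add)
    finally show ?thesis .
  qed
  have "exp (2*r) \<le> exp (4*r)" using r by simp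
  then have "exp (2*r) * d \<le> exp (4*r) * d" using d by (rule mult_right_mono)
  then show ?thesis using 1 2 eq by (simp add: abs_triangle_ineq[THEN order_trans])
qed

lemma Zf_diff:
  assumes u: "Bd r u" and v: "Bd r v" and d: "\<And>t. t \<in> {0..1} \<Longrightarrow> \<bar>u t - v t\<bar> \<le> d"
  shows "\<bar>Zf u - Zf v\<bar> \<le> exp r * d"
proof -
  have iu: "(\<lambda>x. exp (u x)) integrable_on {0..1}" using Bd_cont[OF u]
    by (intro integrable_continuous_interval continuous_intros)
  have iv: "(\<lambda>x. exp (v x)) integrable_on {0..1}" using Bd_cont[OF v]
    by (intro integrable_continuous_interval continuous_intros)
  have "Zf u - Zf v = integral {0..1} (\<lambda>x. exp (u x) - exp (v x))"
    unfolding Zf_def by (rule integral_diff[symmetric, OF iu iv])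
  also have "\<bar>\<dots>\<bar> \<le> exp r * d"
  proof (rule int01_bound)
    show "(\<lambda>x. exp (u x) - exp (v x)) integrable_on {0..1}" by (rule integrable_diff[OF iu iv])
    fix x :: real assume x: "x \<in> {0..1}"
    have "\<bar>exp (u x) - exp (v x)\<bar> \<le> exp (max (u x) (v x)) * \<bar>u x - v x\<bar>" by (rule exp_lip)
    also have "\<dots> \<le> exp r * d"
      using Bd_le[OF u x] Bd_le[OF v x] d[OF x] by (intro mult_mono) auto
    finally show "\<bar>exp (u x) - exp (v x)\<bar> \<le> exp r * d" .
  qed
  finally show ?thesis .
qed

lemma F_diff:
  assumes r: "0 \<le> r" and dd: "0 \<le> d" and u: "Bd r u" and v: "Bd r v"
    and d: "\<And>t. t \<in> {0..1} \<Longrightarrow> \<bar>u t - v t\<bar> \<le> d"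
  shows "\<bar>F u t - F v t\<bar> \<le> 2 * exp (4*r) * d"
proof -
  have "F u t - F v t = integral {0..1} (\<lambda>s. kern t s * (sin (3 / 2 * pi * s) * exp (u s) / Zf u) - kern t s * (sin (3 / 2 * pi * s) * exp (v s) / Zf v))"
    unfolding F_def by (rule integral_diff[symmetric]) (intro integrand_int[OF u] integrand_int[OF v])+
  also have "\<bar>\<dots>\<bar> \<le> 2 * exp (4*r) * d"
  proof (rule int01_bound)
    show "(\<lambda>s. kern t s * (sin (3 / 2 * pi * s) * exp (u s) / Zf u) - kern t s * (sin (3 / 2 * pi * s) * exp (v s) / Zf v)) integrable_on {0..1}"
      by (intro integrable_diff integrand_int[OF u] integrand_int[OF v])
    fix s :: real assume s: "s \<in> {0..1}"
    have w: "\<bar>exp (u s) / Zf u - exp (v s) / Zf v\<bar> \<le> 2 * exp (4*r) * d"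
    proof (rule ratio_lip[OF r dd])
      show "exp (-r) \<le> Zf u" "exp (-r) \<le> Zf v" using Zf_bounds u v by auto
      show "0 < exp (v s)" by simp
      show "exp (v s) \<le> exp r" using Bd_le[OF v s] by simp
      show "\<bar>exp (u s) - exp (v s)\<bar> \<le> exp r * d"
      proof -
        have "\<bar>exp (u s) - exp (v s)\<bar> \<le> exp (max (u s) (v s)) * \<bar>u s - v s\<bar>" by (rule exp_lip)
        also have "\<dots> \<le> exp r * d"
          using Bd_le[OF u s] Bd_le[OF v s] d[OF s] by (intro mult_mono) auto
        finally show ?thesis .
      qed
      show "\<bar>Zf u - Zf v\<bar> \<le> exp r * d" by (rule Zf_diff[OF u v d])
    qed
    have "kern t s * (sin (3 / 2 * pi * s) * exp (u s) / Zf u) - kern t s * (sin (3 / 2 * pi * s) * exp (v s) / Zf v)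
        = kern t s * sin (3 / 2 * pi * s) * (exp (u s) / Zf u - exp (v s) / Zf v)"
      by (simp add: algebra_simps)
    also have "\<bar>\<dots>\<bar> = \<bar>kern t s\<bar> * \<bar>sin (3 / 2 * pi * s)\<bar> * \<bar>exp (u s) / Zf u - exp (v s) / Zf v\<bar>"
      by (simp add: abs_mult)
    also have "\<dots> \<le> 1 * 1 * (2 * exp (4*r) * d)"
      using w kern_bound[of t s] by (intro mult_mono) auto
    finally show "\<bar>kern t s * (sin (3 / 2 * pi * s) * exp (u s) / Zf u) - kern t s * (sin (3 / 2 * pi * s) * exp (v s) / Zf v)\<bar> \<le> 2 * exp (4*r) * d"
      by simp
  qed
  finally show ?thesis .
qed

lemma NF_diff:
  assumes r: "0 \<le> r" and dd: "0 \<le> d" and u: "Bd r u" and v: "Bd r v"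
    and d: "\<And>t. t \<in> {0..1} \<Longrightarrow> \<bar>u t - v t\<bar> \<le> d"
  shows "\<bar>NF u - NF v\<bar> \<le> 2 * exp (4*r) * d"
proof -
  have d': "\<And>t. t \<in> {0..1} \<Longrightarrow> \<bar>v t - u t\<bar> \<le> d" using d by (simp add: abs_minus_commute)
  have "NF u \<le> NF v + 2 * exp (4*r) * d"
    unfolding NF_def supnorm01_def
  proof (rule cSUP_least)
    fix t :: real assume t: "t \<in> {0..1}"
    have "\<bar>F u t\<bar> \<le> \<bar>F v t\<bar> + 2 * exp (4*r) * d" using F_diff[OF r dd u v d, of t] by linarith
    also have "\<bar>F v t\<bar> \<le> (SUP t\<in>{0..1}. \<bar>F v t\<bar>)" using NF_ge[OF v t] by (simp add: NF_def supnorm01_def)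
    finally show "\<bar>F u t\<bar> \<le> (SUP t\<in>{0..1}. \<bar>F v t\<bar>) + 2 * exp (4*r) * d" by simp
  qed auto
  moreover have "NF v \<le> NF u + 2 * exp (4*r) * d"
    unfolding NF_def supnorm01_def
  proof (rule cSUP_least)
    fix t :: real assume t: "t \<in> {0..1}"
    have "\<bar>F v t\<bar> \<le> \<bar>F u t\<bar> + 2 * exp (4*r) * d" using F_diff[OF r dd v u d', of t] by linarith
    also have "\<bar>F u t\<bar> \<le> (SUP t\<in>{0..1}. \<bar>F u t\<bar>)" using NF_ge[OF u t] by (simp add: NF_def supnorm01_def)
    finally show "\<bar>F v t\<bar> \<le> (SUP t\<in>{0..1}. \<bar>F u t\<bar>) + 2 * exp (4*r) * d" by simp
  qed auto
  ultimately show ?thesis by linarith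
qed

lemma beta_pos:
  fixes \<rho> :: real
  assumes "\<rho> < ln (sqrt 3)"
  shows "9 * exp (-2*\<rho>) - exp (2*\<rho>) > 0"
proof -
  have "ln (sqrt 3) = ln 3 / 2" by (simp add: ln_sqrt)
  then have "4*\<rho> < ln 9"
    using assms ln_realpow[of 3 2] by simp
  then have "exp (4*\<rho>) < 9" by (metis exp_less_cancel_iff exp_ln zero_less_numeral)
  moreover have "exp (2*\<rho>) = exp (-2*\<rho>) * exp (4*\<rho>)" by (simp flip: exp_add)
  ultimately show ?thesis by simp
qed

lemma supnorm_bound:
  assumes "continuous_on {0..1} u" "t \<in> {0..1}"
  shows "\<bar>u t\<bar> \<le> supnorm01 u"
proof -
  have "compact ((\<lambda>t. \<bar>u t\<bar>) ` {0..1})"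
    by (intro compact_continuous_image continuous_intros assms(1)) auto
  then have "bdd_above ((\<lambda>t. \<bar>u t\<bar>) ` {0..1})"
    by (intro bounded_imp_bdd_above compact_imp_bounded)
  then show ?thesis unfolding supnorm01_def using assms(2) by (intro cSUP_upper)
qed

lemma part2:
  fixes \<rho> :: real
  assumes "0 < \<rho>" "\<rho> < ln (sqrt 3)" and sol: "solves lam u" and nrm: "supnorm01 u = \<rho>"
  shows "\<bar>lam\<bar> \<le> 4 * pi^2 * \<rho> / (9 * exp (-2 * \<rho>) - exp (2 * \<rho>))"
proof -
  have cu: "continuous_on {0..1} u" using sol by (simp add: solves_def)
  have B: "Bd \<rho> u" unfolding Bd_def using supnorm_bound[OF cu] nrm cu by auto
  have u1: "u 1 = lam * F u 1" using sol by (simp add: solves_def F_def Zf_def)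
  define \<beta> where "\<beta> = (9 * exp (-2*\<rho>) - exp (2*\<rho>)) / (4 * pi^2)"
  have bpos: "\<beta> > 0" unfolding \<beta>_def using beta_pos[OF assms(2)] by simp
  have F1: "F u 1 \<ge> \<beta>" unfolding \<beta>_def by (rule F_at_1[OF B])
  have "\<bar>lam\<bar> * \<beta> \<le> \<bar>lam\<bar> * F u 1" using F1 by (intro mult_left_mono) auto
  also have "\<dots> = \<bar>u 1\<bar>" using u1 F1 bpos by (simp add: abs_mult)
  also have "\<dots> \<le> \<rho>" using Bd_le[OF B, of 1] by simp
  finally have "\<bar>lam\<bar> \<le> \<rho> / \<beta>" using bpos by (simp add: field_simps)
  also have "\<rho> / \<beta> = 4 * pi^2 * \<rho> / (9 * exp (-2 * \<rho>) - exp (2 * \<rho>))"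
    unfolding \<beta>_def by simp
  finally show ?thesis .
qed

definition Tm :: "real \<Rightarrow> real \<Rightarrow> (real \<Rightarrow> real) \<Rightarrow> real \<Rightarrow> real" where
  "Tm \<rho> \<sigma> u t = (\<sigma> * \<rho> / NF u) * F u t"

lemma lip_cont:
  fixes f :: "real \<Rightarrow> real"
  assumes L: "0 \<le> L" and lip: "\<And>t t'. t \<in> {0..1} \<Longrightarrow> t' \<in> {0..1} \<Longrightarrow> \<bar>f t - f t'\<bar> \<le> L * \<bar>t - t'\<bar>"
  shows "continuous_on {0..1} f"
  unfolding continuous_on_iff
proof (intro ballI allI impI)
  fix x e :: real assume x: "x \<in> {0..1}" and e: "0 < e"
  show "\<exists>d>0. \<forall>x'\<in>{0..1}. dist x' x < d \<longrightarrow> dist (f x') (f x) < e"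
  proof (intro exI[of _ "e / (L + 1)"] conjI ballI impI)
    show "0 < e / (L + 1)" using e L by simp
    fix x' assume x': "x' \<in> {0..1}" and d: "dist x' x < e / (L + 1)"
    have "dist (f x') (f x) \<le> L * \<bar>x' - x\<bar>" using lip[OF x' x] by (simp add: dist_real_def)
    also have "\<dots> \<le> L * (e / (L + 1))" using d L by (intro mult_left_mono) (auto simp: dist_real_def)
    also have "\<dots> < e" using e L by (simp add: field_simps)
    finally show "dist (f x') (f x) < e" .
  qed
qed

lemma ratio_lip2:
  fixes A B P Q c \<beta> E :: real
  assumes b: "0 < \<beta>" and P: "\<beta> \<le> P" and Q: "\<beta> \<le> Q" and B: "\<bar>B\<bar> \<le> E"
    and AB: "\<bar>A - B\<bar> \<le> c" and PQ: "\<bar>P - Q\<bar> \<le> c"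
  shows "\<bar>A / P - B / Q\<bar> \<le> c / \<beta> + E * c / \<beta>^2"
proof -
  have Pp: "P > 0" and Qp: "Q > 0" using b P Q by linarith+
  have c0: "c \<ge> 0" using AB by linarith
  have E0: "E \<ge> 0" using B by linarith
  have eq: "A / P - B / Q = (A - B) / P + B * (Q - P) / (P * Q)"
    using Pp Qp by (simp add: field_simps)
  have 1: "\<bar>(A - B) / P\<bar> \<le> c / \<beta>"
  proof -
    have "\<bar>(A - B) / P\<bar> = \<bar>A - B\<bar> / P" using Pp by simp
    also have "\<dots> \<le> c / \<beta>" by (rule frac_le) (use AB P b c0 in auto)
    finally show ?thesis .
  qed
  have 2: "\<bar>B * (Q - P) / (P * Q)\<bar> \<le> E * c / \<beta>^2"
  proof -
    have "\<bar>B * (Q - P) / (P * Q)\<bar> = \<bar>B\<bar> * \<bar>P - Q\<bar> / (P * Q)" using Pp Qp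
      by (simp add: abs_mult abs_minus_commute)
    also have "\<dots> \<le> (E * c) / (\<beta> * \<beta>)"
      by (rule frac_le) (use B PQ P Q Pp Qp b E0 c0 in \<open>auto intro!: mult_mono\<close>)
    finally show ?thesis by (simp add: power2_eq_square)
  qed
  show ?thesis using 1 2 eq by (simp add: abs_triangle_ineq[THEN order_trans])
qed

locale exi =
  fixes \<rho> \<sigma> :: real
  assumes rpos: "0 < \<rho>" and rlt: "\<rho> < ln (sqrt 3)" and sig: "\<bar>\<sigma>\<bar> = 1"
begin

definition "\<beta> = (9 * exp (-2*\<rho>) - exp (2*\<rho>)) / (4 * pi^2)"
definition "L = \<rho> / \<beta> * (2 * exp (2*\<rho>))"
definition "C2 = \<rho> * (2 * exp (4*\<rho>) / \<beta> + exp (2*\<rho>) * (2 * exp (4*\<rho>)) / \<beta>^2)"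
abbreviation "T \<equiv> Tm \<rho> \<sigma>"

lemma beta_gt: "\<beta> > 0" unfolding \<beta>_def using beta_pos[OF rlt] by simp

lemma L_ge: "L \<ge> 0" unfolding L_def using beta_gt rpos by simp

lemma C2_ge: "C2 \<ge> 0" unfolding C2_def using beta_gt rpos by simp

lemma NF_beta: "Bd \<rho> u \<Longrightarrow> \<beta> \<le> NF u"
  using F_at_1[of \<rho> u] NF_ge[of \<rho> u 1] unfolding \<beta>_def by auto

lemma T_bound:
  assumes u: "Bd \<rho> u" and t: "t \<in> {0..1}"
  shows "\<bar>T u t\<bar> \<le> \<rho>"
proof -
  have N: "NF u > 0" using NF_beta[OF u] beta_gt by linarith
  have "\<bar>T u t\<bar> = \<rho> * (\<bar>F u t\<bar> / NF u)" using N rpos sig by (simp add: Tm_def abs_mult)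
  also have "\<dots> \<le> \<rho> * 1" using NF_ge[OF u t] N rpos by (intro mult_left_mono) auto
  finally show ?thesis by simp
qed

lemma T_lip:
  assumes u: "Bd \<rho> u"
  shows "\<bar>T u t - T u t'\<bar> \<le> L * \<bar>t - t'\<bar>"
proof -
  have N: "NF u \<ge> \<beta>" using NF_beta[OF u] .
  have Np: "NF u > 0" using N beta_gt by linarith
  have "T u t - T u t' = (\<sigma> * \<rho> / NF u) * (F u t - F u t')" by (simp add: Tm_def right_diff_distrib)
  then have "\<bar>T u t - T u t'\<bar> = \<rho> / NF u * \<bar>F u t - F u t'\<bar>" using Np rpos sig by (simp add: abs_mult)
  also have "\<dots> \<le> \<rho> / \<beta> * (2 * exp (2*\<rho>) * \<bar>t - t'\<bar>)"
    using F_lip[OF u, of t t'] N beta_gt rpos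
    by (intro mult_mono frac_le) auto
  finally show ?thesis by (simp add: L_def mult_ac)
qed

lemma T_cont: "Bd \<rho> u \<Longrightarrow> continuous_on {0..1} (T u)"
  by (rule lip_cont[OF L_ge T_lip])

lemma T_diff:
  assumes u: "Bd \<rho> u" and v: "Bd \<rho> v" and dd: "0 \<le> d"
    and d: "\<And>t. t \<in> {0..1} \<Longrightarrow> \<bar>u t - v t\<bar> \<le> d"
  shows "\<bar>T u t - T v t\<bar> \<le> C2 * d"
proof -
  have r: "0 \<le> \<rho>" using rpos by simp
  have "\<bar>F u t / NF u - F v t / NF v\<bar> \<le> (2 * exp (4*\<rho>) * d) / \<beta> + exp (2*\<rho>) * (2 * exp (4*\<rho>) * d) / \<beta>^2"
    by (rule ratio_lip2[OF beta_gt NF_beta[OF u] NF_beta[OF v] F_bound[OF v] F_diff[OF r dd u v d] NF_diff[OF r dd u v d]])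
  moreover have "T u t - T v t = \<sigma> * \<rho> * (F u t / NF u - F v t / NF v)" by (simp add: Tm_def algebra_simps)
  ultimately have "\<bar>T u t - T v t\<bar> \<le> \<rho> * ((2 * exp (4*\<rho>) * d) / \<beta> + exp (2*\<rho>) * (2 * exp (4*\<rho>) * d) / \<beta>^2)"
    using sig rpos by (simp add: abs_mult mult_left_mono)
  also have "\<dots> = C2 * d" by (simp add: C2_def algebra_simps)
  finally show ?thesis .
qed

end

definition hat :: "nat \<Rightarrow> nat \<Rightarrow> real \<Rightarrow> real" where
  "hat m j t = max 0 (1 - \<bar>real m * t - real j\<bar>)"
definition sh :: "nat \<Rightarrow> real \<Rightarrow> real" where
  "sh m t = (\<Sum>j\<le>m. hat m j t)"
definition psi :: "nat \<Rightarrow> nat \<Rightarrow> real \<Rightarrow> real" where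
  "psi m j t = hat m j t / sh m t"

lemma hat_nonneg: "hat m j t \<ge> 0" by (simp add: hat_def)

lemma sh_ge:
  assumes m: "m \<ge> 1" and t: "t \<in> {0..1}"
  shows "sh m t \<ge> 1/2"
proof -
  define z where "z = \<lfloor>real m * t + 1/2\<rfloor>"
  have mt: "0 \<le> real m * t" "real m * t \<le> real m" using t m by (auto simp: mult_left_le)
  have z0: "z \<ge> 0" unfolding z_def using mt by simp
  have z1: "real_of_int z \<le> real m * t + 1/2" unfolding z_def by (rule of_int_floor_le)
  have z2: "real m * t + 1/2 < real_of_int z + 1" unfolding z_def by (rule real_of_int_floor_add_one_gt)
  have zm: "z \<le> int m"
  proof -
    have "real_of_int z < real m + 1" using z1 mt by linarith
    then have "z < int m + 1" by linarith
    then show ?thesis by simp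
  qed
  define j0 where "j0 = nat z"
  have j0r: "real j0 = real_of_int z" unfolding j0_def using z0 by simp
  have j0m: "j0 \<in> {..m}" unfolding j0_def using zm z0 by auto
  have "\<bar>real m * t - real j0\<bar> \<le> 1/2" unfolding j0r abs_le_iff using z1 z2 by (intro conjI; linarith)
  then have "hat m j0 t \<ge> 1/2" unfolding hat_def by simp
  also have "hat m j0 t \<le> sh m t" unfolding sh_def
    by (rule member_le_sum[OF j0m]) (auto simp: hat_nonneg)
  finally show ?thesis .
qed

lemma sh_pos: "m \<ge> 1 \<Longrightarrow> t \<in> {0..1} \<Longrightarrow> sh m t > 0"
  using sh_ge[of m t] by linarith

lemma psi_nonneg: "m \<ge> 1 \<Longrightarrow> t \<in> {0..1} \<Longrightarrow> psi m j t \<ge> 0"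
  unfolding psi_def using sh_pos[of m t] hat_nonneg[of m j t] by simp

lemma psi_sum: "m \<ge> 1 \<Longrightarrow> t \<in> {0..1} \<Longrightarrow> (\<Sum>j\<le>m. psi m j t) = 1"
  unfolding psi_def using sh_pos[of m t] by (simp add: sum_divide_distrib[symmetric] sh_def)

lemma psi_le1:
  assumes "m \<ge> 1" "t \<in> {0..1}" "j \<le> m"
  shows "psi m j t \<le> 1"
proof -
  have "psi m j t \<le> (\<Sum>j\<le>m. psi m j t)"
    by (rule member_le_sum) (use assms psi_nonneg in auto)
  then show ?thesis using psi_sum[OF assms(1,2)] by simp
qed

lemma psi_pos:
  assumes m: "m \<ge> 1" and t: "t \<in> {0..1}" and p: "psi m j t \<noteq> 0"
  shows "\<bar>t - real j / real m\<bar> < 1 / real m"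
proof -
  have "hat m j t \<noteq> 0" using p by (simp add: psi_def)
  then have "\<bar>real m * t - real j\<bar> < 1" by (auto simp: hat_def max_def split: if_splits)
  moreover have "real m * t - real j = real m * (t - real j / real m)" using m by (simp add: field_simps)
  ultimately have "real m * \<bar>t - real j / real m\<bar> < 1" by (simp add: abs_mult)
  then show ?thesis using m by (simp add: field_simps)
qed

lemma psi_cont: "m \<ge> 1 \<Longrightarrow> continuous_on {0..1} (psi m j)"
  unfolding psi_def[abs_def] sh_def hat_def
  apply (intro continuous_intros)
  using sh_pos[of m] unfolding sh_def hat_def by force

lemma cont_from_lip:
  fixes \<phi> :: "(nat \<Rightarrow> real) \<Rightarrow> real"
  assumes lip: "\<And>a b. a \<in> S \<Longrightarrow> b \<in> S \<Longrightarrow> \<bar>\<phi> b - \<phi> a\<bar> \<le> C * (\<Sum>j\<le>m. \<bar>b j - a j\<bar>)"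
  shows "continuous_on S \<phi>"
  unfolding continuous_on_def
proof
  fix a assume a: "a \<in> S"
  have coord: "((\<lambda>b. b j) \<longlongrightarrow> a j) (at a within S)" for j
  proof -
    have "((\<lambda>b. b j) \<longlongrightarrow> a j) (at a within UNIV)"
      using continuous_on_product_coordinates[of j] unfolding continuous_on_def by auto
    then show ?thesis by (rule tendsto_within_subset) auto
  qed
  have "((\<lambda>b. C * (\<Sum>j\<le>m. \<bar>b j - a j\<bar>)) \<longlongrightarrow> C * (\<Sum>j\<le>m. \<bar>a j - a j\<bar>)) (at a within S)"
    by (intro tendsto_intros coord)
  then have lim0: "((\<lambda>b. C * (\<Sum>j\<le>m. \<bar>b j - a j\<bar>)) \<longlongrightarrow> 0) (at a within S)" by simp
  have ev: "eventually (\<lambda>b. norm (\<phi> b - \<phi> a) \<le> C * (\<Sum>j\<le>m. \<bar>b j - a j\<bar>)) (at a within S)"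
    unfolding eventually_at_filter using lip[OF a] by (intro always_eventually) auto
  have "((\<lambda>b. \<phi> b - \<phi> a) \<longlongrightarrow> 0) (at a within S)"
    by (rule Lim_null_comparison[OF ev lim0])
  then show "(\<phi> \<longlongrightarrow> \<phi> a) (at a within S)" by (simp add: Lim_null[of \<phi>])
qed

lemma clamp_lip:
  fixes r x y :: real
  shows "\<bar>max (-r) (min r x) - max (-r) (min r y)\<bar> \<le> \<bar>x - y\<bar>"
  by (simp add: max_def min_def abs_if)

context exi begin

lemma approx:
  assumes m: "m \<ge> 1"
  shows "\<exists>x. Bd \<rho> x \<and> (\<forall>t\<in>{0..1}. \<bar>x t - T x t\<bar> \<le> L / real m)"
proof -
  define K where "K = \<rho> * (real m + 1)"
  have Kp: "K > 0" unfolding K_def using rpos by simp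
  define cc where "cc a j = max (-\<rho>) (min \<rho> (K * a j))" for a :: "nat \<Rightarrow> real" and j
  define X where "X a = (\<lambda>t. \<Sum>j\<le>m. psi m j t * cc a j)" for a
  define G where "G a = (\<lambda>i. if i \<le> m then T (X a) (real i / real m) / K else 0)" for a
  have cc_b: "\<bar>cc a j\<bar> \<le> \<rho>" for a j unfolding cc_def using rpos by auto
  have cc_lip: "\<bar>cc a j - cc b j\<bar> \<le> K * \<bar>a j - b j\<bar>" for a b j
  proof -
    have "\<bar>cc a j - cc b j\<bar> \<le> \<bar>K * a j - K * b j\<bar>" unfolding cc_def by (rule clamp_lip)
    also have "\<dots> = K * \<bar>a j - b j\<bar>" using Kp by (simp add: abs_scale)
    finally show ?thesis .
  qed
  have XB: "Bd \<rho> (X a)" for a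
    unfolding Bd_def
  proof
    show "continuous_on {0..1} (X a)" unfolding X_def
      by (intro continuous_intros psi_cont[OF m])
    show "\<forall>t\<in>{0..1}. \<bar>X a t\<bar> \<le> \<rho>"
    proof
      fix t :: real assume t: "t \<in> {0..1}"
      have "\<bar>X a t\<bar> \<le> (\<Sum>j\<le>m. \<bar>psi m j t * cc a j\<bar>)" unfolding X_def by (rule sum_abs)
      also have "\<dots> \<le> (\<Sum>j\<le>m. psi m j t * \<rho>)"
        by (rule sum_mono) (use psi_nonneg[OF m t] cc_b in \<open>auto simp: abs_mult intro: mult_left_mono\<close>)
      also have "\<dots> = \<rho>" using psi_sum[OF m t] by (simp add: sum_distrib_right[symmetric])
      finally show "\<bar>X a t\<bar> \<le> \<rho>" .
    qed
  qed
  have Xd: "\<bar>X a t - X b t\<bar> \<le> K * (\<Sum>j\<le>m. \<bar>a j - b j\<bar>)" if t: "t \<in> {0..1}" for a b t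
  proof -
    have "X a t - X b t = (\<Sum>j\<le>m. psi m j t * (cc a j - cc b j))"
      unfolding X_def by (simp add: sum_subtractf right_diff_distrib)
    also have "\<bar>\<dots>\<bar> \<le> (\<Sum>j\<le>m. \<bar>psi m j t * (cc a j - cc b j)\<bar>)" by (rule sum_abs)
    also have "\<dots> \<le> (\<Sum>j\<le>m. K * \<bar>a j - b j\<bar>)"
    proof (rule sum_mono)
      fix j assume j: "j \<in> {..m}"
      have "\<bar>psi m j t * (cc a j - cc b j)\<bar> = psi m j t * \<bar>cc a j - cc b j\<bar>"
        using psi_nonneg[OF m t] by (simp add: abs_mult)
      also have "\<dots> \<le> 1 * (K * \<bar>a j - b j\<bar>)"
        using psi_le1[OF m t, of j] j psi_nonneg[OF m t] cc_lip[of a j b] by (intro mult_mono) auto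
      finally show "\<bar>psi m j t * (cc a j - cc b j)\<bar> \<le> K * \<bar>a j - b j\<bar>" by simp
    qed
    also have "\<dots> = K * (\<Sum>j\<le>m. \<bar>a j - b j\<bar>)" by (simp add: sum_distrib_left)
    finally show ?thesis .
  qed
  have nodes: "real i / real m \<in> {0..1}" if "i \<le> m" for i
    using m that by (auto simp: field_simps)
  have GD: "G a \<in> Dn m" for a
  proof -
    have "(\<Sum>i\<le>m. (G a i)^2) \<le> (\<Sum>i\<le>m. (\<rho> / K)^2)"
    proof (rule sum_mono)
      fix i assume i: "i \<in> {..m}"
      have "\<bar>G a i\<bar> = \<bar>T (X a) (real i / real m)\<bar> / K" using i Kp by (simp add: G_def)
      also have "\<dots> \<le> \<rho> / K" using T_bound[OF XB nodes] i Kp by (simp add: divide_right_mono)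
      finally have "\<bar>G a i\<bar> \<le> \<rho> / K" .
      then have "\<bar>G a i\<bar>^2 \<le> (\<rho> / K)^2" by (intro power_mono) auto
      then show "(G a i)^2 \<le> (\<rho> / K)^2" by simp
    qed
    also have "\<dots> = (real m + 1) * (\<rho> / K)^2" by simp
    also have "\<dots> = 1 / (real m + 1)"
    proof -
      have "\<rho> / K = 1 / (real m + 1)" unfolding K_def using rpos by simp
      then show ?thesis by (simp add: power2_eq_square)
    qed
    also have "\<dots> \<le> 1" by simp
    finally show ?thesis by (auto simp: Dn_def G_def)
  qed
  have Gc: "continuous_on (Dn m) G"
  proof (rule continuous_on_coordinatewise_then_product)
    fix i
    show "continuous_on (Dn m) (\<lambda>a. G a i)"
    proof (cases "i \<le> m")
      case False
      then show ?thesis by (simp add: G_def)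
    next
      case True
      show ?thesis
      proof (rule cont_from_lip[where C=C2 and m=m])
        fix a b :: "nat \<Rightarrow> real"
        have d0: "0 \<le> K * (\<Sum>j\<le>m. \<bar>b j - a j\<bar>)" using Kp by simp
        have Td: "\<bar>T (X b) (real i / real m) - T (X a) (real i / real m)\<bar> \<le> C2 * (K * (\<Sum>j\<le>m. \<bar>b j - a j\<bar>))"
          by (rule T_diff[OF XB XB d0 Xd])
        have "G b i - G a i = (T (X b) (real i / real m) - T (X a) (real i / real m)) / K"
          using True by (simp add: G_def diff_divide_distrib)
        then have "\<bar>G b i - G a i\<bar> = \<bar>T (X b) (real i / real m) - T (X a) (real i / real m)\<bar> / K"
          using Kp by simp
        also have "\<dots> \<le> C2 * (K * (\<Sum>j\<le>m. \<bar>b j - a j\<bar>)) / K"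
          by (rule divide_right_mono) (use Kp Td in auto)
        also have "\<dots> = C2 * (\<Sum>j\<le>m. \<bar>b j - a j\<bar>)" using Kp by simp
        finally show "\<bar>G b i - G a i\<bar> \<le> C2 * (\<Sum>j\<le>m. \<bar>b j - a j\<bar>)" .
      qed
    qed
  qed
  obtain a where aD: "a \<in> Dn m" and afix: "G a = a"
    using brouwer_nat[OF Gc GD] by blast
  define x where "x = X a"
  have ccfix: "cc a j = T x (real j / real m)" if j: "j \<le> m" for j
  proof -
    have "a j = T x (real j / real m) / K" using fun_cong[OF afix, of j] j by (simp add: G_def x_def)
    then have "K * a j = T x (real j / real m)" using Kp by simp
    moreover have "\<bar>T x (real j / real m)\<bar> \<le> \<rho>" unfolding x_def by (rule T_bound[OF XB nodes[OF j]])
    ultimately show ?thesis unfolding cc_def by (auto simp: abs_le_iff)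
  qed
  have "\<bar>x t - T x t\<bar> \<le> L / real m" if t: "t \<in> {0..1}" for t
  proof -
    have eqxt: "x t - T x t = (\<Sum>j\<le>m. psi m j t * (T x (real j / real m) - T x t))"
    proof -
      have "x t = (\<Sum>j\<le>m. psi m j t * cc a j)" by (simp add: x_def X_def)
      also have "\<dots> = (\<Sum>j\<le>m. psi m j t * T x (real j / real m))"
        by (rule sum.cong) (simp_all add: ccfix)
      finally have "x t = (\<Sum>j\<le>m. psi m j t * T x (real j / real m))" .
      moreover have "T x t = (\<Sum>j\<le>m. psi m j t * T x t)"
        using psi_sum[OF m t] by (simp add: sum_distrib_right[symmetric])
      ultimately show ?thesis by (simp add: sum_subtractf right_diff_distrib)
    qed
    have "\<bar>x t - T x t\<bar> \<le> (\<Sum>j\<le>m. \<bar>psi m j t * (T x (real j / real m) - T x t)\<bar>)"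
      unfolding eqxt by (rule sum_abs)
    also have "\<dots> \<le> (\<Sum>j\<le>m. psi m j t * (L / real m))"
    proof (rule sum_mono)
      fix j assume j: "j \<in> {..m}"
      show "\<bar>psi m j t * (T x (real j / real m) - T x t)\<bar> \<le> psi m j t * (L / real m)"
      proof (cases "psi m j t = 0")
        case True then show ?thesis by simp
      next
        case False
        have "\<bar>T x (real j / real m) - T x t\<bar> \<le> L * \<bar>real j / real m - t\<bar>"
          unfolding x_def by (rule T_lip[OF XB])
        also have "\<dots> \<le> L * (1 / real m)"
        proof (rule mult_left_mono)
          have "\<bar>t - real j / real m\<bar> < 1 / real m" by (rule psi_pos[OF m t False])
          then show "\<bar>real j / real m - t\<bar> \<le> 1 / real m" by (subst abs_minus_commute) simp
        qed (rule L_ge)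
        finally have "\<bar>T x (real j / real m) - T x t\<bar> \<le> L / real m" by simp
        then have "psi m j t * \<bar>T x (real j / real m) - T x t\<bar> \<le> psi m j t * (L / real m)"
          using psi_nonneg[OF m t, of j] by (rule mult_left_mono)
        then show ?thesis using psi_nonneg[OF m t, of j] by (simp add: abs_mult)
      qed
    qed
    also have "\<dots> = (\<Sum>j\<le>m. psi m j t) * (L / real m)" by (rule sum_distrib_right[symmetric])
    also have "\<dots> = L / real m" using psi_sum[OF m t] by simp
    finally show ?thesis .
  qed
  then have "Bd \<rho> x \<and> (\<forall>t\<in>{0..1}. \<bar>x t - T x t\<bar> \<le> L / real m)"
    using XB[of a] unfolding x_def[symmetric] by simp
  then show ?thesis by auto
qed

end

context exi begin

lemma fixed: "\<exists>y. Bd \<rho> y \<and> (\<forall>t\<in>{0..1}. T y t = y t)"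
proof -
  have "\<forall>n. \<exists>x. Bd \<rho> x \<and> (\<forall>t\<in>{0..1}. \<bar>x t - T x t\<bar> \<le> L / real (Suc n))"
  proof
    fix n show "\<exists>x. Bd \<rho> x \<and> (\<forall>t\<in>{0..1}. \<bar>x t - T x t\<bar> \<le> L / real (Suc n))"
      using approx[of "Suc n"] by simp
  qed
  then obtain xs where xsB: "\<And>n. Bd \<rho> (xs n)"
    and xsa: "\<And>n t. t \<in> {0..1} \<Longrightarrow> \<bar>xs n t - T (xs n) t\<bar> \<le> L / real (Suc n)"
    by metis
  define FF where "FF n = T (xs n)" for n
  have eqc: "\<exists>d>0. \<forall>n y. y \<in> {0..1} \<and> norm (x - y) < d \<longrightarrow> norm (FF n x - FF n y) < e"
    if x: "x \<in> {0..1}" and e: "0 < e" for x e :: real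
  proof (intro exI[of _ "e / (L + 1)"] conjI allI impI)
    show "0 < e / (L + 1)" using e L_ge by simp
    fix n y assume y: "y \<in> {0..1} \<and> norm (x - y) < e / (L + 1)"
    have "norm (FF n x - FF n y) \<le> L * \<bar>x - y\<bar>" unfolding FF_def using T_lip[OF xsB] by simp
    also have "\<dots> \<le> L * (e / (L + 1))" using y L_ge by (intro mult_left_mono) auto
    also have "\<dots> < e" using e L_ge by (simp add: field_simps)
    finally show "norm (FF n x - FF n y) < e" .
  qed
  obtain g k where gc: "continuous_on {0..1} g" and km: "strict_mono (k :: nat \<Rightarrow> nat)"
    and gu: "\<And>e. 0 < e \<Longrightarrow> \<exists>N. \<forall>n x. n \<ge> N \<and> x \<in> {0..1} \<longrightarrow> norm (FF (k n) x - g x) < e"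
  proof (rule Arzela_Ascoli[of "{0..1}" FF \<rho>])
    show "compact {0..1::real}" by simp
    show "norm (FF n x) \<le> \<rho>" if "x \<in> {0..1}" for n x
      unfolding FF_def using T_bound[OF xsB that] by simp
    show "\<exists>d>0. \<forall>n y. y \<in> {0..1} \<and> norm (x - y) < d \<longrightarrow> norm (FF n x - FF n y) < e"
      if "x \<in> {0..1}" "0 < e" for x e using eqc that by blast
  qed auto
  have gb: "\<bar>g t\<bar> \<le> \<rho>" if t: "t \<in> {0..1}" for t
  proof (rule field_le_epsilon)
    fix e :: real assume e: "0 < e"
    obtain N where N: "\<forall>n x. n \<ge> N \<and> x \<in> {0..1} \<longrightarrow> norm (FF (k n) x - g x) < e"
      using gu[OF e] by blast
    have "\<bar>FF (k N) t - g t\<bar> < e" using N t by auto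
    moreover have "\<bar>FF (k N) t\<bar> \<le> \<rho>" unfolding FF_def by (rule T_bound[OF xsB t])
    ultimately show "\<bar>g t\<bar> \<le> \<rho> + e" by linarith
  qed
  have gB: "Bd \<rho> g" unfolding Bd_def using gc gb by auto
  have "T g t = g t" if t: "t \<in> {0..1}" for t
  proof -
    have "\<bar>T g t - g t\<bar> \<le> 0 + \<epsilon>" if eps: "0 < \<epsilon>" for \<epsilon>
    proof -
      define e1 where "e1 = \<epsilon> / (2 * C2 + 1)"
      have e1: "0 < e1" unfolding e1_def using eps C2_ge by simp
      obtain N1 where N1: "\<forall>n x. n \<ge> N1 \<and> x \<in> {0..1} \<longrightarrow> norm (FF (k n) x - g x) < e1"
        using gu[OF e1] by blast
      obtain N2 :: nat where N2: "L / e1 < real N2" using reals_Archimedean2 by blast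
      define n where "n = max N1 N2"
      have kn: "n \<le> k n" by (rule seq_suble[OF km])
      have small: "L / real (Suc (k n)) \<le> e1"
      proof -
        have "L < e1 * real N2" using N2 e1 by (simp add: field_simps)
        also have "\<dots> \<le> e1 * real (Suc (k n))" using kn e1 by (intro mult_left_mono) (auto simp: n_def)
        finally show ?thesis using e1 by (simp add: field_simps)
      qed
      have close: "\<bar>xs (k n) s - g s\<bar> \<le> 2 * e1" if s: "s \<in> {0..1}" for s
      proof -
        have "\<bar>xs (k n) s - T (xs (k n)) s\<bar> \<le> e1" using xsa[OF s, of "k n"] small by linarith
        moreover have "\<bar>T (xs (k n)) s - g s\<bar> < e1" using N1 s unfolding FF_def by (auto simp: n_def)
        ultimately show ?thesis by linarith
      qed
      have "\<bar>T (xs (k n)) t - T g t\<bar> \<le> C2 * (2 * e1)"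
        by (rule T_diff[OF xsB gB _ close]) (use e1 in simp)
      moreover have "\<bar>T (xs (k n)) t - g t\<bar> < e1" using N1 t unfolding FF_def by (auto simp: n_def)
      ultimately have "\<bar>T g t - g t\<bar> \<le> C2 * (2 * e1) + e1" by linarith
      also have "\<dots> = e1 * (2 * C2 + 1)" by (simp add: algebra_simps)
      also have "\<dots> = \<epsilon>" unfolding e1_def using C2_ge by simp
      finally show ?thesis by simp
    qed
    then have "\<bar>T g t - g t\<bar> \<le> 0" by (rule field_le_epsilon)
    then show ?thesis by simp
  qed
  then show ?thesis using gB by blast
qed

lemma exists_sol: "\<exists>lam u. \<sigma> * lam > 0 \<and> supnorm01 u = \<rho> \<and> solves lam u"
proof -
  obtain y where yB: "Bd \<rho> y" and yfix: "\<And>t. t \<in> {0..1} \<Longrightarrow> T y t = y t" using fixed by blast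
  define N where "N = NF y"
  have Np: "N > 0" unfolding N_def using NF_beta[OF yB] beta_gt by linarith
  define lam where "lam = \<sigma> * \<rho> / N"
  have yeq: "y t = lam * F y t" if "t \<in> {0..1}" for t
    using yfix[OF that] by (simp add: Tm_def lam_def N_def)
  have s2: "\<sigma> * \<sigma> = 1" using sig by (metis abs_mult_self_eq mult_1)
  have "\<sigma> * lam = \<rho> / N" unfolding lam_def using s2 by (simp add: mult.assoc[symmetric])
  then have lpos: "\<sigma> * lam > 0" using Np rpos by simp
  have sol: "solves lam y"
    unfolding solves_def using Bd_cont[OF yB] yeq by (simp add: F_def Zf_def)
  have yc: "continuous_on {0..1} y" by (rule Bd_cont[OF yB])
  have absy: "\<bar>y t\<bar> = \<rho> / N * \<bar>F y t\<bar>" if "t \<in> {0..1}" for t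
    using yeq[OF that] sig Np rpos by (simp add: lam_def abs_mult)
  have le: "supnorm01 y \<le> \<rho>" unfolding supnorm01_def
    by (rule cSUP_least) (use Bd_le[OF yB] in auto)
  have ge: "supnorm01 y \<ge> \<rho>"
  proof (rule ccontr)
    assume "\<not> supnorm01 y \<ge> \<rho>"
    then have lt: "supnorm01 y < \<rho>" by simp
    have "NF y \<le> supnorm01 y * N / \<rho>"
      unfolding NF_def supnorm01_def[of "F y"]
    proof (rule cSUP_least)
      fix t :: real assume t: "t \<in> {0..1}"
      have "\<bar>y t\<bar> \<le> supnorm01 y" by (rule supnorm_bound[OF yc t])
      then have "\<rho> / N * \<bar>F y t\<bar> \<le> supnorm01 y" using absy[OF t] by simp
      then show "\<bar>F y t\<bar> \<le> supnorm01 y * N / \<rho>"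
        using Np rpos by (simp add: field_simps)
    qed auto
    then have "N \<le> supnorm01 y * N / \<rho>" by (simp add: N_def)
    also have "\<dots> < N" using lt Np rpos by (simp add: field_simps)
    finally show False by simp
  qed
  show ?thesis using lpos le ge sol by (intro exI[of _ lam] exI[of _ y]) auto
qed

end

theorem mainTheorem4:
  fixes \<rho> :: real
  assumes "0 < \<rho>" and "\<rho> < ln (sqrt 3)"
  shows "(\<exists>lp up ln' un. lp > 0 \<and> ln' < 0 \<and>
            supnorm01 up = \<rho> \<and> supnorm01 un = \<rho> \<and>
            solves lp up \<and> solves ln' un)
       \<and> (\<forall>lam u. solves lam u \<and> supnorm01 u = \<rho> \<longrightarrow>
            \<bar>lam\<bar> \<le> 4 * pi^2 * \<rho> / (9 * exp (-2 * \<rho>) - exp (2 * \<rho>)))"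
proof -
  interpret p: exi \<rho> 1 using assms by unfold_locales auto
  interpret q: exi \<rho> "-1" using assms by unfold_locales auto
  obtain lp up where p1: "1 * lp > 0" and p2: "supnorm01 up = \<rho>" and p3: "solves lp up"
    using p.exists_sol by blast
  obtain lq uq where q1: "-1 * lq > 0" and q2: "supnorm01 uq = \<rho>" and q3: "solves lq uq"
    using q.exists_sol by blast
  have "\<exists>lp up ln' un. lp > 0 \<and> ln' < 0 \<and>
            supnorm01 up = \<rho> \<and> supnorm01 un = \<rho> \<and>
            solves lp up \<and> solves ln' un"
    using p1 p2 p3 q1 q2 q3 by (intro exI[of _ lp] exI[of _ up] exI[of _ lq] exI[of _ uq]) auto
  moreover have "\<forall>lam u. solves lam u \<and> supnorm01 u = \<rho> \<longrightarrow>
            \<bar>lam\<bar> \<le> 4 * pi^2 * \<rho> / (9 * exp (-2 * \<rho>) - exp (2 * \<rho>))"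
    using part2[OF assms] by blast
  ultimately show ?thesis by blast
qed

end
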